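(* Let $q$ be a prime power, let $h(x)\in\mathbb{F}_{q^6}[x]$, let $L(x)=\sum_i a_i x^{q^i}$ be a $q$-polynomial with all $a_i\in\mathbb{F}_q$, and let $\delta\in\mathbb{F}_{q^6}$. Write $w(x)=x^{q^2}-x^q+x+\delta$. Then the polynomial $$f(x)=h(w(x))^{q^4}+h(w(x))^{q^3}-h(w(x))^{q}-h(w(x))+L(x)$$ permutes $\mathbb{F}_{q^6}$ if and only if $L(x)$ permutes $\mathbb{F}_{q^6}$.
   Context: A polynomial permutes $\mathbb{F}_{q^6}$ if it induces a bijection of $\mathbb{F}_{q^6}$. *)

theory Defs
  imports "HOL-Computational_Algebra.Polynomial" "HOL-Computational_Algebra.Primes"
begin

definition prime_power :: "nat \<Rightarrow> bool" where
  "prime_power q \<longleftrightarrow> (\<exists>p k. prime p \<and> k > 0 \<and> q = p ^ k)"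

definition q_poly_eval :: "nat \<Rightarrow> 'a::comm_ring_1 list \<Rightarrow> 'a \<Rightarrow> 'a" where
  "q_poly_eval q as x = (\<Sum>i<length as. as ! i * x ^ (q ^ i))"

definition permutes_field :: "('a \<Rightarrow> 'a) \<Rightarrow> bool" where
  "permutes_field f \<longleftrightarrow> bij f"

end

theory Submission
  imports Defs "HOL-Number_Theory.Residues"
begin

lemma fin_field_pow_card:
  fixes x :: "'a::{field,finite}"
  shows "x ^ card (UNIV :: 'a set) = x"
proof (cases "x = 0")
  case False
  have "x * (\<Prod>y\<in>UNIV-{0}. x * y) = x * x ^ (card (UNIV :: 'a set) - 1) * \<Prod>(UNIV-{0})"
    by (simp add: prod.distrib mult_ac)
  also have "x * x ^ (card (UNIV :: 'a set) - 1) = x ^ Suc (card (UNIV :: 'a set) - 1)"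
    by (subst power_Suc) auto
  also have "Suc (card (UNIV :: 'a set) - 1) = card (UNIV :: 'a set)"
    using finite_UNIV_card_ge_0[where ?'a = 'a] by simp
  also have "(\<Prod>y\<in>UNIV-{0}. x * y) = (\<Prod>y\<in>UNIV-{0}. y)"
    by (rule prod.reindex_bij_witness[of _ "\<lambda>y. y / x" "\<lambda>y. x * y"]) (use False in auto)
  finally show ?thesis
    by simp
qed (use finite_UNIV_card_ge_0[where ?'a = 'a] in auto)

lemma char_setup:
  fixes q :: nat
  assumes "prime_power q" and "card (UNIV :: 'a::{field,finite} set) = q ^ 6"
  shows "prime CHAR('a) \<and> (\<exists>k. q = CHAR('a) ^ k)"
proof -
  obtain p k where pk: "prime p" "k > 0" "q = p ^ k" using assms(1) unfolding prime_power_def by blast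
  have cp: "prime CHAR('a)"
    using prime_CHAR_semidom finite_imp_CHAR_pos[of ] by (metis finite_UNIV)
  have "CHAR('a) dvd p ^ (k*6)" using CHAR_dvd_CARD[where 'a='a] assms(2) pk
    by (simp add: power_mult)
  then have "CHAR('a) dvd p" using cp prime_dvd_power by blast
  then have "CHAR('a) = p" using cp pk(1) primes_dvd_imp_eq by blast
  then show ?thesis using cp pk by blast
qed

theorem mainTheorem9:
  fixes q :: nat and h :: "'a::{field,finite} poly" and as :: "'a list" and \<delta> :: 'a
  assumes "prime_power q"
    and "card (UNIV :: 'a set) = q ^ 6"
    and "\<forall>c\<in>set as. c ^ q = c"
  shows "permutes_field (\<lambda>x. let w = x ^ (q^2) - x ^ q + x + \<delta>; y = poly h w in
            y ^ (q^4) + y ^ (q^3) - y ^ q - y + q_poly_eval q as x)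
         \<longleftrightarrow> permutes_field (q_poly_eval q as)"
proof -
  obtain k where cp: "prime CHAR('a)" and qk: "q = CHAR('a) ^ k"
    using char_setup[OF assms(1,2)] by blast
  have fadd: "(x + y) ^ (q^j) = x ^ (q^j) + y ^ (q^j)" for x y :: 'a and j
    by (rule freshmans_dream'[OF cp, of _ "k*j"]) (simp add: qk power_mult)
  have fdiff: "(x - y) ^ (q^j) = x ^ (q^j) - y ^ (q^j)" for x y :: 'a and j
    using fadd[of "x - y" y j] by (simp add: algebra_simps)
  have fsum: "(sum g A) ^ (q^j) = (\<Sum>i\<in>A. g i ^ (q^j))" for g :: "nat \<Rightarrow> 'a" and A j
    by (rule freshmans_dream_sum'[OF cp, of _ "k*j"]) (simp add: qk power_mult)
  have fadd1: "(x + y) ^ q = x ^ q + y ^ q" for x y :: 'a using fadd[of x y 1] by simp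
  have fdiff1: "(x - y) ^ q = x ^ q - y ^ q" for x y :: 'a using fdiff[of x y 1] by simp
  have pp: "(x ^ (q^i)) ^ (q^j) = x ^ (q^(i+j))" for x :: 'a and i j
    by (simp add: power_mult power_add)
  have pp1: "(x ^ (q^i)) ^ q = x ^ (q^(Suc i))" for x :: 'a and i
    by (simp add: mult.commute flip: power_mult)
  have p6: "x ^ (q^6) = x" for x :: 'a using fin_field_pow_card[of x] assms(2) by simp
  have qpos: "q > 0" using qk cp by (simp add: prime_gt_0_nat)
  define L where "L = q_poly_eval q as"
  have Ladd: "L (x + y) = L x + L y" for x y
    unfolding L_def q_poly_eval_def by (simp add: fadd distrib_left sum.distrib)
  have Ldiff: "L (x - y) = L x - L y" for x y
    using Ladd[of "x - y" y] by simp
  have L0: "L 0 = 0" using Ldiff[of 0 0] by simp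
  have Lfrob: "L (x ^ q) = (L x) ^ q" for x
  proof -
    have "(L x) ^ q = (L x) ^ (q^1)" by simp
    also have "\<dots> = (\<Sum>i<length as. (as ! i * x ^ (q ^ i)) ^ (q^1))"
      unfolding L_def q_poly_eval_def by (rule fsum)
    also have "\<dots> = (\<Sum>i<length as. as ! i * (x ^ q) ^ (q ^ i))"
    proof (rule sum.cong)
      fix i assume "i \<in> {..<length as}"
      then have "as ! i ^ q = as ! i" using assms(3) by simp
      then show "(as ! i * x ^ (q ^ i)) ^ (q^1) = as ! i * (x ^ q) ^ (q ^ i)"
        by (simp add: power_mult_distrib flip: power_mult) (simp add: mult.commute)
    qed simp
    finally show ?thesis unfolding L_def q_poly_eval_def by simp
  qed
  define T where "T x = x ^ (q^2) - x ^ q + x" for x :: 'a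
  define \<psi> where "\<psi> y = y ^ (q^4) + y ^ (q^3) - y ^ q - y" for y :: 'a
  have Tadd: "T (x + y) = T x + T y" for x y
    unfolding T_def by (simp add: fadd fadd1)
  have Tdiff: "T (x - y) = T x - T y" for x y
    using Tadd[of "x - y" y] by simp
  have T0: "T 0 = 0" using Tdiff[of 0 0] by simp
  have Tpsi: "T (\<psi> y) = 0" for y
  proof -
    have a: "y ^ (q^7) = y ^ q" using pp[of y 6 1] p6 by simp
    have b: "(y ^ q) ^ (q^2) = y ^ (q^3)" "(y ^ q) ^ q = y ^ (q^2)"
      by (simp_all add: power3_eq_cube power2_eq_square mult.assoc flip: power_mult)
    show ?thesis unfolding T_def \<psi>_def
      by (simp add: fadd fdiff fadd1 fdiff1 pp pp1 b p6 a)
  qed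
  have LT: "L (T x) = T (L x)" for x
  proof -
    have "(L x) ^ (q^2) = L (x ^ (q^2))"
      using Lfrob[of x] Lfrob[of "x^q"] by (simp add: power2_eq_square power_mult)
    then show ?thesis unfolding T_def by (simp add: Ladd Ldiff Lfrob)
  qed
  define f where "f x = \<psi> (poly h (T x + \<delta>)) + L x" for x
  have feq: "(\<lambda>x. let w = x ^ (q^2) - x ^ q + x + \<delta>; y = poly h w in
            y ^ (q^4) + y ^ (q^3) - y ^ q - y + q_poly_eval q as x) = f"
    by (rule ext) (simp add: f_def \<psi>_def T_def L_def Let_def)
  have Tf: "T (f x) = L (T x)" for x
    unfolding f_def by (simp add: Tadd Tpsi LT)
  have fz: "T z = 0 \<Longrightarrow> f (x + z) = f x + L z" for x z
    unfolding f_def by (simp add: Tadd Ladd)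
  have bij_iff: "bij g \<longleftrightarrow> inj g" for g :: "'a \<Rightarrow> 'a"
    using finite_UNIV_inj_surj bij_def by (metis finite_UNIV)
  have main: "inj f \<longleftrightarrow> inj L"
  proof
    assume injf: "inj f"
    then have "range f = UNIV" using finite_UNIV_inj_surj by (metis finite_UNIV)
    have "L ` range T = T ` range f" by (auto simp: Tf image_iff simp flip: Tf)
    also have "\<dots> = range T" using \<open>range f = UNIV\<close> by simp
    finally have "card (L ` range T) = card (range T)" by simp
    then have injT: "inj_on L (range T)" by (simp add: eq_card_imp_inj_on)
    show "inj L"
    proof (rule injI)
      fix a b assume "L a = L b"
      define z where "z = a - b"
      have Lz: "L z = 0" using \<open>L a = L b\<close> by (simp add: z_def Ldiff)
      have "L (T z) = L (T 0)" by (simp add: LT Lz T0 L0)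
      then have "T z = T 0" using injT by (auto dest: inj_onD)
      then have "T z = 0" using T0 by simp
      then have "f (0 + z) = f 0" using fz[of z 0] Lz by (simp only: add_0_right)
      then have "z = 0" using injf by (auto dest: injD)
      then show "a = b" by (simp add: z_def)
    qed
  next
    assume injL: "inj L"
    show "inj f"
    proof (rule injI)
      fix a b assume "f a = f b"
      then have "L (T a) = L (T b)" using Tf by metis
      then have "T a = T b" using injL by (auto dest: injD)
      then have "L a = L b" using \<open>f a = f b\<close> unfolding f_def by simp
      then show "a = b" using injL by (auto dest: injD)
    qed
  qed
  show ?thesis
    unfolding feq permutes_field_def bij_iff using main by (simp add: L_def)
qed

end
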